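(* Let $\mathcal G=(\bar Q,\mu,\eta)$ be a $\sigma$-admissible intervention rule and let $\tilde{\mathcal M}$ be the absorbing MDP built from $\mathcal G$ with $\tilde R=-1$. If $\hat\pi$ is $\varepsilon$-suboptimal for $\tilde{\mathcal M}$, then for every (comparator) policy $\pi^*$, $$V^{\pi^*}(d_0)-V^{\hat\pi}(d_0)\le \frac{2}{1-\gamma}P_{\mathcal G}(\pi^* )+\varepsilon,\qquad \bar V^{\hat\pi}(d_0)\le \bar Q(d_0,\mu)+\frac{\min\{\sigma+\eta,2\gamma\}}{1-\gamma}+\varepsilon .$$
   Context: $\mathcal M=(\mathcal S,\mathcal A,P,r,\gamma)$ is a discounted MDP with discrete state space $\mathcal S$, discrete action space $\mathcal A$ (every minimum over actions used is assumed attained), transition kernel $P(s'\mid s,a)$, reward $r(s,a)\in[0,1]$, discount $\gamma\in[0,1)$, initial distribution $d_0$. $\mathcal S$ contains two distinguished states $s_\triangleright,s_\circ$; $\mathcal S_{\mathrm{unsafe}}=\{s_\triangleright,s_\circ\}$, $\mathcal S_{\mathrm{safe}}=\mathcal S\setminus\mathcal S_{\mathrm{unsafe}}$. From $s_\triangleright$ every action leads to $s_\circ$ w.p. 1, $s_\circ$ is absorbing, $r(s,a)=0$ for $s\in\mathcal S_{\mathrm{unsafe}}$, and $d_0(s_\circ)=0$. Cost $c(s,a)=\mathbb 1\{s=s_\triangleright\}$; $\bar{\mathcal M}=(\mathcal S,\mathcal A,P,c,\gamma)$. Policies are stationary maps $\pi:\mathcal S\to\Delta(\mathcal A)$. For $f:\mathcal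 S\to\mathbb R$, $f(d)=\mathbb E_{s\sim d}f(s)$; for $g:\mathcal S\times\mathcal A\to\mathbb R$, $g(s,\pi)=\mathbb E_{a\sim\pi(\cdot|s)}g(s,a)$, $g(d,\pi)=\mathbb E_{s\sim d}g(s,\pi)$. $\rho^\pi$ is the law of trajectories $(s_0,a_0,s_1,\dots)$ of $\pi$ in $\mathcal M$ with $s_0\sim d_0$. $Q^\pi(s,a)=\mathbb E[\sum_{t\ge0}\gamma^tr(s_t,a_t)\mid s_0=s,a_0=a]$, $V^\pi(s)=Q^\pi(s,\pi)$; $\bar Q^\pi,\bar V^\pi$ are the same with $c$ in place of $r$. Intervention rule: a triple $\mathcal G=(\bar Q,\mu,\eta)$ with backup policy $\mu$, threshold $\eta\in[0,1]$, and $\bar Q:\mathcal S_{\mathrm{safe}}\times\mathcal A\to[0,1]$ extended by $\bar Q(s_\triangleright,a)=1$, $\bar Q(s_\circ,a)=0$. $\bar A(s,a)=\bar Q(s,a)-\bar Q(s,\mu)$; intervention set $\mathcal I=\{(s,a)\in\mathcal S_{\mathrm{safe}}\times\mathcal A:\bar A(s,a)>\eta\}$. $\mathcal G$ is $\sigma$-admissible ($\sigma\ge0$) if for all $s\in\mathcal S_{\mathrm{safe}},a\in\mathcal A$: $\bar Q(s,a)\in[0,\gamma]$ and $\bar Q(s,a)+\sigma\ge c(s,a)+\gamma\mathbb E_{s'\sim P(\cdot|s,a)}[\bar Q(s',\mu)]$. Absorbing MDP: for $\tilde R\le 0$, $\tilde{\mathcal M}=(\mathcal S\cup\{s_\dagger\},\mathcal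 A,\tilde P,\tilde r,\gamma)$ with a new state $s_\dagger$: $\tilde r(s,a)=\tilde R$ if $(s,a)\in\mathcal I$, $\tilde r(s_\dagger,a)=0$, $\tilde r=r$ otherwise; $\tilde P(\cdot|s,a)$ is the point mass at $s_\dagger$ if $(s,a)\in\mathcal I$ or $s=s_\dagger$, and $\tilde P=P$ otherwise. Policies are extended to $s_\dagger$ arbitrarily; $\tilde V^\pi$ is the value in $\tilde{\mathcal M}$ from $d_0$, $\tilde V^*(d_0)=\sup_\pi\tilde V^\pi(d_0)$, and $\pi$ is $\varepsilon$-suboptimal for $\tilde{\mathcal M}$ if $\tilde V^*(d_0)-\tilde V^\pi(d_0)\le\varepsilon$. $P_{\mathcal G}(\pi)=(1-\gamma)\sum_{h\ge0}\gamma^h\Pr_{\rho^\pi}(\exists t\le h:(s_t,a_t)\in\mathcal I)$. *)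

theory Defs
  imports "HOL-Probability.Probability"
begin

fun traj :: "('s \<Rightarrow> 'a pmf) \<Rightarrow> ('s \<Rightarrow> 'a \<Rightarrow> 's pmf) \<Rightarrow> 's pmf \<Rightarrow> nat \<Rightarrow> ('s \<times> 'a) list pmf" where
  "traj pol P d 0 = do { s \<leftarrow> d; a \<leftarrow> pol s; return_pmf [(s, a)] }"
| "traj pol P d (Suc h) = do { xs \<leftarrow> traj pol P d h;
       s' \<leftarrow> P (fst (last xs)) (snd (last xs)); a' \<leftarrow> pol s';
       return_pmf (xs @ [(s', a')]) }"

definition dval :: "real \<Rightarrow> ('s \<Rightarrow> 'a \<Rightarrow> 's pmf) \<Rightarrow> ('s \<Rightarrow> 'a \<Rightarrow> real) \<Rightarrow> ('s \<Rightarrow> 'a pmf) \<Rightarrow> 's pmf \<Rightarrow> real" where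
  "dval \<gamma> P g pol d = (\<Sum>t. \<gamma> ^ t * measure_pmf.expectation (traj pol P d t)
                                     (\<lambda>xs. g (fst (last xs)) (snd (last xs))))"

definition cost :: "'s \<Rightarrow> 's \<Rightarrow> 'a \<Rightarrow> real" where
  "cost s_tri s a = (if s = s_tri then 1 else 0)"

definition Qext :: "'s \<Rightarrow> 's \<Rightarrow> ('s \<Rightarrow> 'a \<Rightarrow> real) \<Rightarrow> 's \<Rightarrow> 'a \<Rightarrow> real" where
  "Qext s_tri s_circ Qb s a = (if s = s_tri then 1 else if s = s_circ then 0 else Qb s a)"

definition polavg :: "('s \<Rightarrow> 'a \<Rightarrow> real) \<Rightarrow> ('s \<Rightarrow> 'a pmf) \<Rightarrow> 's \<Rightarrow> real" where
  "polavg g pol s = measure_pmf.expectation (pol s) (g s)"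

definition interv :: "'s \<Rightarrow> 's \<Rightarrow> ('s \<Rightarrow> 'a \<Rightarrow> real) \<Rightarrow> ('s \<Rightarrow> 'a pmf) \<Rightarrow> real \<Rightarrow> ('s \<times> 'a) set" where
  "interv s_tri s_circ Qb \<mu> \<eta> = {(s, a). s \<notin> {s_tri, s_circ} \<and>
      Qext s_tri s_circ Qb s a - polavg (Qext s_tri s_circ Qb) \<mu> s > \<eta>}"

definition admissible :: "real \<Rightarrow> ('s \<Rightarrow> 'a \<Rightarrow> 's pmf) \<Rightarrow> 's \<Rightarrow> 's \<Rightarrow> ('s \<Rightarrow> 'a \<Rightarrow> real) \<Rightarrow> ('s \<Rightarrow> 'a pmf) \<Rightarrow> real \<Rightarrow> real \<Rightarrow> bool" where
  "admissible \<gamma> P s_tri s_circ Qb \<mu> \<eta> \<sigma> \<longleftrightarrow> \<sigma> \<ge> 0 \<and> 0 \<le> \<eta> \<and> \<eta> \<le> 1 \<and>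
     (\<forall>s a. s \<notin> {s_tri, s_circ} \<longrightarrow>
        0 \<le> Qb s a \<and> Qb s a \<le> \<gamma> \<and>
        Qb s a + \<sigma> \<ge> cost s_tri s a + \<gamma> * measure_pmf.expectation (P s a) (polavg (Qext s_tri s_circ Qb) \<mu>))"

text \<open>Absorbing MDP on 's option; None plays the role of the new state s_dagger.\<close>
definition absP :: "('s \<times> 'a) set \<Rightarrow> ('s \<Rightarrow> 'a \<Rightarrow> 's pmf) \<Rightarrow> 's option \<Rightarrow> 'a \<Rightarrow> 's option pmf" where
  "absP I P x a = (case x of None \<Rightarrow> return_pmf None
     | Some s \<Rightarrow> if (s, a) \<in> I then return_pmf None else map_pmf Some (P s a))"

definition absr :: "('s \<times> 'a) set \<Rightarrow> real \<Rightarrow> ('s \<Rightarrow> 'a \<Rightarrow> real) \<Rightarrow> 's option \<Rightarrow> 'a \<Rightarrow> real" where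
  "absr I R r x a = (case x of None \<Rightarrow> 0
     | Some s \<Rightarrow> if (s, a) \<in> I then R else r s a)"

text \<open>Extension of a policy to s_dagger (the choice there is irrelevant: s_dagger has reward 0
and is absorbing).\<close>
definition extpol :: "('s \<Rightarrow> 'a pmf) \<Rightarrow> 's option \<Rightarrow> 'a pmf" where
  "extpol pol x = (case x of None \<Rightarrow> return_pmf undefined | Some s \<Rightarrow> pol s)"

definition PG :: "real \<Rightarrow> ('s \<Rightarrow> 'a \<Rightarrow> 's pmf) \<Rightarrow> 's pmf \<Rightarrow> ('s \<times> 'a) set \<Rightarrow> ('s \<Rightarrow> 'a pmf) \<Rightarrow> real" where
  "PG \<gamma> P d0 I pol = (1 - \<gamma>) * (\<Sum>h. \<gamma> ^ h *
      measure_pmf.prob (traj pol P d0 h) {xs. \<exists>x\<in>set xs. x \<in> I})"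

end

theory Submission
  imports Defs
begin


lemma integrable_pmf_bdd:
  fixes f :: "'b \<Rightarrow> real"
  assumes "\<And>x. \<bar>f x\<bar> \<le> B"
  shows "integrable (measure_pmf p) f"
  by (rule measure_pmf.integrable_const_bound[where B=B]) (auto simp: assms)

lemma integral_bind_pmf_real:
  fixes f :: "'b \<Rightarrow> real"
  assumes "\<And>x. \<bar>f x\<bar> \<le> B"
  shows "measure_pmf.expectation (bind_pmf M N) f = measure_pmf.expectation M (\<lambda>x. measure_pmf.expectation (N x) f)"
  unfolding measure_pmf_bind
  apply (rule integral_bind[where K="count_space UNIV" and B=B and B'=1])
  using assms apply (auto simp: space_subprob_algebra measure_pmf.subprob_space_axioms
     intro: prob_space_imp_subprob_space)
  done

lemma exp_mono_pmf:
  fixes f g :: "'b \<Rightarrow> real"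
  assumes "\<And>x. x \<in> set_pmf p \<Longrightarrow> f x \<le> g x" "\<And>x. \<bar>f x\<bar> \<le> B" "\<And>x. \<bar>g x\<bar> \<le> B'"
  shows "measure_pmf.expectation p f \<le> measure_pmf.expectation p g"
  by (rule integral_mono_AE) (auto intro: integrable_pmf_bdd assms simp: AE_measure_pmf_iff)

lemma exp_bound_pmf:
  fixes f :: "'b \<Rightarrow> real"
  assumes "\<And>x. \<bar>f x\<bar> \<le> B"
  shows "\<bar>measure_pmf.expectation p f\<bar> \<le> B"
proof -
  have "\<bar>measure_pmf.expectation p f\<bar> \<le> measure_pmf.expectation p (\<lambda>x. \<bar>f x\<bar>)"
    by (rule integral_abs_bound)
  also have "\<dots> \<le> measure_pmf.expectation p (\<lambda>x. B)"
    by (rule exp_mono_pmf[where B=B and B'="\<bar>B\<bar>"]) (use assms in auto)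
  finally show ?thesis by simp
qed

definition killed :: "('s \<times> 'a) set \<Rightarrow> ('s \<times> 'a) list \<Rightarrow> bool" where
  "killed I xs = (\<exists>x\<in>set (butlast xs). x \<in> I)"

definition lastk :: "('s \<times> 'a) set \<Rightarrow> ('s \<times> 'a) list \<Rightarrow> ('s \<times> 'a) \<times> bool" where
  "lastk I xs = (last xs, killed I xs)"

definition stepK :: "('s \<times> 'a) set \<Rightarrow> ('s \<Rightarrow> 'a pmf) \<Rightarrow> ('s \<Rightarrow> 'a \<Rightarrow> 's pmf) \<Rightarrow> ('s \<times> 'a) \<times> bool \<Rightarrow> (('s \<times> 'a) \<times> bool) pmf" where
  "stepK I pol P y = bind_pmf (P (fst (fst y)) (snd (fst y)))
     (\<lambda>s'. map_pmf (\<lambda>a'. ((s', a'), snd y \<or> fst y \<in> I)) (pol s'))"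

lemma traj_nonempty: "xs \<in> set_pmf (traj pol P d t) \<Longrightarrow> xs \<noteq> []"
  by (induct t arbitrary: xs) auto

lemma lastk_0: "map_pmf (lastk I) (traj pol P d 0) = bind_pmf d (\<lambda>s. map_pmf (\<lambda>a. ((s, a), False)) (pol s))"
  by (simp add: lastk_def killed_def map_bind_pmf map_pmf_def bind_assoc_pmf bind_return_pmf)

lemma lastk_Suc: "map_pmf (lastk I) (traj pol P d (Suc t)) = bind_pmf (map_pmf (lastk I) (traj pol P d t)) (stepK I pol P)"
proof -
  have pw: "map_pmf (lastk I) (P (fst (last xs)) (snd (last xs)) \<bind> (\<lambda>s'. pol s' \<bind> (\<lambda>a'. return_pmf (xs @ [(s', a')])))) =
          stepK I pol P (lastk I xs)" if "xs \<in> set_pmf (traj pol P d t)" for xs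
  proof -
    from that have ne: "xs \<noteq> []" by (rule traj_nonempty)
    have k: "killed I (xs @ [y]) = (killed I xs \<or> last xs \<in> I)" for y
      using ne unfolding killed_def
      by (metis append_butlast_last_id butlast_snoc insert_iff list.set(2) rotate1.simps(2) set_rotate1 Un_iff set_append)
    show ?thesis
      unfolding stepK_def lastk_def map_bind_pmf
      by (simp add: k map_pmf_def bind_assoc_pmf bind_return_pmf)
  qed
  have "map_pmf (lastk I) (traj pol P d (Suc t)) = bind_pmf (traj pol P d t) (\<lambda>xs. map_pmf (lastk I) (P (fst (last xs)) (snd (last xs)) \<bind> (\<lambda>s'. pol s' \<bind> (\<lambda>a'. return_pmf (xs @ [(s', a')])))))"
    by (simp add: map_bind_pmf)
  also have "\<dots> = bind_pmf (traj pol P d t) (\<lambda>xs. stepK I pol P (lastk I xs))"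
    by (rule bind_pmf_cong[OF refl]) (rule pw)
  finally show ?thesis by (simp add: bind_map_pmf)
qed

lemma last_0: "map_pmf last (traj pol P d 0) = bind_pmf d (\<lambda>s. map_pmf (Pair s) (pol s))"
  by (simp add: map_bind_pmf map_pmf_def bind_assoc_pmf bind_return_pmf)

lemma last_eq_lastk: "map_pmf last X = map_pmf fst (map_pmf (lastk I) X)"
  by (simp add: map_pmf_comp lastk_def)

lemma last_Suc: "map_pmf last (traj pol P d (Suc t)) =
   bind_pmf (map_pmf last (traj pol P d t)) (\<lambda>y. bind_pmf (P (fst y) (snd y)) (\<lambda>s'. map_pmf (Pair s') (pol s')))"
  unfolding last_eq_lastk[of _ "{}"] lastk_Suc
  by (simp add: map_bind_pmf bind_map_pmf stepK_def map_pmf_comp)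

definition Fk :: "('s \<times> 'a) \<times> bool \<Rightarrow> 's option \<times> 'a" where
  "Fk y = (if snd y then (None, undefined) else (Some (fst (fst y)), snd (fst y)))"

lemma absL:
  assumes Q: "\<And>s a. (s, a) \<notin> I \<Longrightarrow> Q s a = P s a"
  shows "map_pmf last (traj (extpol pol) (absP I P) (map_pmf Some d) t) = map_pmf Fk (map_pmf (lastk I) (traj pol Q d t))"
proof (induct t)
  case 0
  show ?case unfolding last_0 lastk_0
    by (simp add: map_bind_pmf bind_map_pmf map_pmf_comp Fk_def extpol_def)
next
  case (Suc t)
  have pw: "bind_pmf (absP I P (fst (Fk y)) (snd (Fk y))) (\<lambda>s'. map_pmf (Pair s') (extpol pol s'))
      = map_pmf Fk (stepK I pol Q y)" for y
  proof (cases "snd y")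
    case True
    then show ?thesis by (simp add: Fk_def absP_def extpol_def stepK_def map_bind_pmf map_pmf_comp bind_return_pmf)
  next
    case False
    then show ?thesis
    proof (cases "fst y \<in> I")
      case True
      with False show ?thesis by (simp add: Fk_def absP_def extpol_def stepK_def map_bind_pmf map_pmf_comp bind_return_pmf)
    next
      case nI: False
      then have "Q (fst (fst y)) (snd (fst y)) = P (fst (fst y)) (snd (fst y))" using Q by (cases "fst y") auto
      with False nI show ?thesis
        by (cases "fst y") (simp add: Fk_def absP_def extpol_def stepK_def map_bind_pmf map_pmf_comp bind_return_pmf bind_map_pmf)
    qed
  qed
  show ?case
    unfolding last_Suc lastk_Suc Suc
    by (simp add: bind_map_pmf map_bind_pmf pw)
qed

abbreviation Ex :: "'b pmf \<Rightarrow> ('b \<Rightarrow> real) \<Rightarrow> real" where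
  "Ex p f \<equiv> measure_pmf.expectation p f"

lemma summable_gbdd:
  fixes a :: "nat \<Rightarrow> real"
  assumes "0 \<le> \<gamma>" "\<gamma> < 1" "\<And>t. \<bar>a t\<bar> \<le> B"
  shows "summable (\<lambda>t. \<gamma> ^ t * a t)"
proof (rule summable_comparison_test[where g="\<lambda>t. B * \<gamma> ^ t"])
  show "\<exists>N. \<forall>n\<ge>N. norm (\<gamma> ^ n * a n) \<le> B * \<gamma> ^ n"
    using assms by (auto simp: abs_mult mult.commute intro!: mult_right_mono)
  show "summable (\<lambda>t. B * \<gamma> ^ t)"
    using assms by (intro summable_mult summable_geometric) auto
qed

lemma suminf_gmono:
  fixes a b :: "nat \<Rightarrow> real"
  assumes "0 \<le> \<gamma>" "\<gamma> < 1" "\<And>t. \<bar>a t\<bar> \<le> B" "\<And>t. \<bar>b t\<bar> \<le> B'" "\<And>t. a t \<le> b t"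
  shows "(\<Sum>t. \<gamma> ^ t * a t) \<le> (\<Sum>t. \<gamma> ^ t * b t)"
  by (rule suminf_le) (use assms in \<open>auto intro: summable_gbdd mult_left_mono\<close>)

lemma suminf_gbound:
  fixes a :: "nat \<Rightarrow> real"
  assumes "0 \<le> \<gamma>" "\<gamma> < 1" "\<And>t. \<bar>a t\<bar> \<le> B"
  shows "(\<Sum>t. \<gamma> ^ t * a t) \<le> B / (1 - \<gamma>)"
proof -
  have "(\<Sum>t. \<gamma> ^ t * a t) \<le> (\<Sum>t. \<gamma> ^ t * B)"
    by (rule suminf_gmono[where B=B and B'="\<bar>B\<bar>"]) (use assms in \<open>auto simp: abs_le_iff\<close>)
  also have "\<dots> = B * (\<Sum>t. \<gamma> ^ t)"
    using assms by (subst suminf_mult[symmetric]) (auto simp: mult.commute intro: summable_geometric)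
  also have "\<dots> = B / (1 - \<gamma>)" using assms by (simp add: suminf_geometric)
  finally show ?thesis .
qed

lemma dval_last: "dval \<gamma> P g pol d = (\<Sum>t. \<gamma> ^ t * Ex (map_pmf last (traj pol P d t)) (\<lambda>y. g (fst y) (snd y)))"
  by (simp add: dval_def)

lemma dval_lastk: "dval \<gamma> P g pol d = (\<Sum>t. \<gamma> ^ t * Ex (map_pmf (lastk I) (traj pol P d t)) (\<lambda>y. g (fst (fst y)) (snd (fst y))))"
  by (simp add: dval_def lastk_def)

lemma dval_upper:
  assumes "0 \<le> \<gamma>" "\<gamma> < 1" "\<And>s a. \<bar>g s a\<bar> \<le> B"
  shows "dval \<gamma> P g pol d \<le> B / (1 - \<gamma>)"
  unfolding dval_last
  by (rule suminf_gbound[OF assms(1,2)]) (rule exp_bound_pmf, use assms in auto)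

lemma absr_bound: assumes "\<And>s a. 0 \<le> r s a \<and> r s a \<le> 1" shows "\<bar>absr I (-1) r x a\<bar> \<le> 1"
proof (cases x)
  case None then show ?thesis by (simp add: absr_def)
next
  case (Some s)
  have "0 \<le> r s a" "r s a \<le> 1" using assms[of s a] by auto
  with Some show ?thesis by (simp add: absr_def)
qed

lemma dval_abs:
  assumes Q: "\<And>s a. (s, a) \<notin> I \<Longrightarrow> Q s a = P s a"
  shows "dval \<gamma> (absP I P) g (extpol pol) (map_pmf Some d) =
     (\<Sum>t. \<gamma> ^ t * Ex (map_pmf (lastk I) (traj pol Q d t)) (\<lambda>y. g (fst (Fk y)) (snd (Fk y))))"
proof -
  have e: "\<And>t. map_pmf last (traj (extpol pol) (absP I P) (map_pmf Some d) t) = map_pmf Fk (map_pmf (lastk I) (traj pol Q d t))"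
    by (rule absL[OF Q])
  show ?thesis unfolding dval_last e by simp
qed

lemma set_bl: "xs \<noteq> [] \<Longrightarrow> set xs = insert (last xs) (set (butlast xs))"
  by (induct xs rule: rev_induct) auto

lemma prob_lastk:
  "measure_pmf.prob (traj pol P d t) {xs. \<exists>x\<in>set xs. x \<in> I}
   = Ex (map_pmf (lastk I) (traj pol P d t)) (indicator {y. snd y \<or> fst y \<in> I})"
proof -
  have "{xs. \<exists>x\<in>set xs. x \<in> I} \<inter> set_pmf (traj pol P d t) = lastk I -` {y. snd y \<or> fst y \<in> I} \<inter> set_pmf (traj pol P d t)"
  proof -
    have eq: "(\<exists>x\<in>set xs. x \<in> I) = (snd (lastk I xs) \<or> fst (lastk I xs) \<in> I)" if "xs \<in> set_pmf (traj pol P d t)" for xs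
      unfolding lastk_def killed_def by (subst set_bl[OF traj_nonempty[OF that]]) auto
    show ?thesis
    proof (rule set_eqI)
      fix xs show "xs \<in> {xs. \<exists>x\<in>set xs. x \<in> I} \<inter> set_pmf (traj pol P d t) \<longleftrightarrow> xs \<in> lastk I -` {y. snd y \<or> fst y \<in> I} \<inter> set_pmf (traj pol P d t)"
        by (cases "xs \<in> set_pmf (traj pol P d t)") (simp_all add: eq)
    qed
  qed
  then have "measure_pmf.prob (traj pol P d t) {xs. \<exists>x\<in>set xs. x \<in> I} =
       measure_pmf.prob (traj pol P d t) (lastk I -` {y. snd y \<or> fst y \<in> I})"
    using measure_Int_set_pmf[of "traj pol P d t" "{xs. \<exists>x\<in>set xs. x \<in> I}"]
      measure_Int_set_pmf[of "traj pol P d t" "lastk I -` {y. snd y \<or> fst y \<in> I}"] by simp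
  then show ?thesis by simp
qed

lemma exp_le_add:
  fixes f g h :: "'b \<Rightarrow> real"
  assumes "\<And>y. y \<in> set_pmf p \<Longrightarrow> f y \<le> g y + c * h y"
    "\<And>y. \<bar>f y\<bar> \<le> Bf" "\<And>y. \<bar>g y\<bar> \<le> Bg" "\<And>y. \<bar>h y\<bar> \<le> Bh"
  shows "Ex p f \<le> Ex p g + c * Ex p h"
proof -
  have ig: "integrable (measure_pmf p) g" and ih: "integrable (measure_pmf p) h"
    by (rule integrable_pmf_bdd[OF assms(3)], rule integrable_pmf_bdd[OF assms(4)])
  have "Ex p f \<le> Ex p (\<lambda>y. g y + c * h y)"
  proof (rule exp_mono_pmf[OF assms(1)])
    show "\<bar>f y\<bar> \<le> Bf" for y by (rule assms)
    show "\<bar>g y + c * h y\<bar> \<le> Bg + \<bar>c\<bar> * Bh" for y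
    proof -
      have "\<bar>c * h y\<bar> \<le> \<bar>c\<bar> * Bh" unfolding abs_mult by (rule mult_left_mono[OF assms(4)]) simp
      then show ?thesis using assms(3)[of y] abs_triangle_ineq[of "g y" "c * h y"] by linarith
    qed
  qed
  also have "\<dots> = Ex p g + c * Ex p h"
    using ig ih by simp
  finally show ?thesis .
qed

lemma absr_Fk_le:
  assumes "\<And>s a. 0 \<le> r s a \<and> r s a \<le> 1"
  shows "absr I (-1) r (fst (Fk y)) (snd (Fk y)) \<le> r (fst (fst y)) (snd (fst y))"
  using assms[of "fst (fst y)" "snd (fst y)"]
  by (auto simp: Fk_def absr_def)

lemma absr_Fk_ge:
  assumes "\<And>s a. 0 \<le> r s a \<and> r s a \<le> 1"
  shows "r (fst (fst y)) (snd (fst y)) \<le> absr I (-1) r (fst (Fk y)) (snd (Fk y)) + 2 * indicator {y. snd y \<or> fst y \<in> I} y"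
  using assms[of "fst (fst y)" "snd (fst y)"]
  by (auto simp: Fk_def absr_def indicator_def)

lemma partA:
  fixes P :: "'s \<Rightarrow> 'a \<Rightarrow> 's pmf"
  assumes g: "0 \<le> \<gamma>" "\<gamma> < 1" and r: "\<And>s a. 0 \<le> r s a \<and> r s a \<le> 1"
   and sub: "(SUP pol. dval \<gamma> (absP I P) (absr I (-1) r) pol (map_pmf Some d0))
        - dval \<gamma> (absP I P) (absr I (-1) r) (extpol \<pi>h) (map_pmf Some d0) \<le> \<epsilon>"
  shows "dval \<gamma> P r \<pi>s d0 - dval \<gamma> P r \<pi>h d0 \<le> 2 / (1 - \<gamma>) * PG \<gamma> P d0 I \<pi>s + \<epsilon>"
proof -
  let ?V = "\<lambda>pol. dval \<gamma> (absP I P) (absr I (-1) r) pol (map_pmf Some d0)"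
  have bdd: "bdd_above (range ?V)"
    by (rule bdd_aboveI2[where M="1/(1-\<gamma>)"]) (rule dval_upper[OF g], rule absr_bound[OF r])
  have h1: "?V (extpol \<pi>s) \<le> (SUP pol. ?V pol)" by (rule cSUP_upper[OF UNIV_I bdd])
  let ?L = "\<lambda>pol t. map_pmf (lastk I) (traj pol P d0 t)"
  have e: "?V (extpol pol) = (\<Sum>t. \<gamma>^t * Ex (?L pol t) (\<lambda>y. absr I (-1) r (fst (Fk y)) (snd (Fk y))))" for pol
    by (rule dval_abs) simp
  have h2: "?V (extpol \<pi>h) \<le> dval \<gamma> P r \<pi>h d0"
    unfolding e dval_lastk[of _ _ _ _ _ I]
  proof (rule suminf_gmono[OF g, where B=1 and B'=1])
    show "\<bar>Ex (?L \<pi>h t) (\<lambda>y. absr I (-1) r (fst (Fk y)) (snd (Fk y)))\<bar> \<le> 1" for t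
      by (rule exp_bound_pmf) (rule absr_bound[OF r])
    show "\<bar>Ex (?L \<pi>h t) (\<lambda>y. r (fst (fst y)) (snd (fst y)))\<bar> \<le> 1" for t
      by (rule exp_bound_pmf) (use r in \<open>auto simp: abs_le_iff\<close>)
    show "Ex (?L \<pi>h t) (\<lambda>y. absr I (-1) r (fst (Fk y)) (snd (Fk y))) \<le> Ex (?L \<pi>h t) (\<lambda>y. r (fst (fst y)) (snd (fst y)))" for t
      by (rule exp_mono_pmf[where B=1 and B'=1]) (auto intro: absr_Fk_le[OF r] absr_bound[OF r], use r in \<open>auto simp: abs_le_iff\<close>)
  qed
  let ?pr = "\<lambda>t. measure_pmf.prob (traj \<pi>s P d0 t) {xs. \<exists>x\<in>set xs. x \<in> I}"
  have h3: "dval \<gamma> P r \<pi>s d0 - ?V (extpol \<pi>s) \<le> 2 * (\<Sum>t. \<gamma>^t * ?pr t)"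
  proof -
    let ?a = "\<lambda>t. Ex (?L \<pi>s t) (\<lambda>y. r (fst (fst y)) (snd (fst y)))"
    let ?b = "\<lambda>t. Ex (?L \<pi>s t) (\<lambda>y. absr I (-1) r (fst (Fk y)) (snd (Fk y)))"
    let ?c = "\<lambda>t. Ex (?L \<pi>s t) (indicator {y. snd y \<or> fst y \<in> I})"
    have ba: "\<bar>?a t\<bar> \<le> 1" for t by (rule exp_bound_pmf) (use r in \<open>auto simp: abs_le_iff\<close>)
    have bb: "\<bar>?b t\<bar> \<le> 1" for t by (rule exp_bound_pmf) (rule absr_bound[OF r])
    have bc: "\<bar>?c t\<bar> \<le> 1" for t by (rule exp_bound_pmf) (auto simp: indicator_def)
    have "dval \<gamma> P r \<pi>s d0 - ?V (extpol \<pi>s) = (\<Sum>t. \<gamma>^t * ?a t) - (\<Sum>t. \<gamma>^t * ?b t)"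
      unfolding e dval_lastk[of _ _ _ _ _ I] ..
    also have "\<dots> = (\<Sum>t. \<gamma>^t * ?a t - \<gamma>^t * ?b t)"
      by (rule suminf_diff[OF summable_gbdd[OF g ba] summable_gbdd[OF g bb]])
    also have "\<dots> \<le> (\<Sum>t. 2 * (\<gamma>^t * ?c t))"
    proof (rule suminf_le)
      show "\<gamma>^t * ?a t - \<gamma>^t * ?b t \<le> 2 * (\<gamma>^t * ?c t)" for t
      proof -
        have "?a t \<le> ?b t + 2 * ?c t"
          by (rule exp_le_add[where Bf=1 and Bg=1 and Bh=1]) (auto intro: absr_Fk_ge[OF r] absr_bound[OF r], use r in \<open>auto simp: abs_le_iff indicator_def\<close>)
        then have "\<gamma>^t * (?a t - ?b t) \<le> \<gamma>^t * (2 * ?c t)"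
          using g by (intro mult_left_mono) auto
        then show ?thesis by (simp add: algebra_simps)
      qed
      show "summable (\<lambda>t. \<gamma>^t * ?a t - \<gamma>^t * ?b t)"
        by (rule summable_diff[OF summable_gbdd[OF g ba] summable_gbdd[OF g bb]])
      show "summable (\<lambda>t. 2 * (\<gamma>^t * ?c t))"
        by (rule summable_mult[OF summable_gbdd[OF g bc]])
    qed
    also have "\<dots> = 2 * (\<Sum>t. \<gamma>^t * ?c t)"
      by (rule suminf_mult[OF summable_gbdd[OF g bc]])
    finally show ?thesis unfolding prob_lastk .
  qed
  have pg: "2 / (1 - \<gamma>) * PG \<gamma> P d0 I \<pi>s = 2 * (\<Sum>t. \<gamma>^t * ?pr t)"
    using g unfolding PG_def by simp
  show ?thesis using h1 h2 h3 sub pg by linarith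
qed

lemma exp_add:
  fixes f g :: "'b \<Rightarrow> real"
  assumes "\<And>y. \<bar>f y\<bar> \<le> Bf" "\<And>y. \<bar>g y\<bar> \<le> Bg"
  shows "Ex p (\<lambda>y. f y + g y) = Ex p f + Ex p g"
  by (rule Bochner_Integration.integral_add[OF integrable_pmf_bdd[OF assms(1)] integrable_pmf_bdd[OF assms(2)]])

lemma exp_cong_pmf:
  fixes f g :: "'b \<Rightarrow> real"
  shows "(\<And>x. x \<in> set_pmf p \<Longrightarrow> f x = g x) \<Longrightarrow> Ex p f = Ex p g"
  by (rule integral_cong_AE) (auto simp: AE_measure_pmf_iff)

lemma modL:
  "map_pmf last (traj (\<lambda>s. map_pmf (m s) (pol s)) P d t)
   = map_pmf (\<lambda>y. (fst y, m (fst y) (snd y))) (map_pmf last (traj pol (\<lambda>s a. P s (m s a)) d t))"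
proof (induct t)
  case 0
  show ?case unfolding last_0 by (simp add: map_bind_pmf map_pmf_comp)
next
  case (Suc t)
  show ?case unfolding last_Suc Suc
    by (simp add: bind_map_pmf map_bind_pmf map_pmf_comp)
qed

lemma nokill:
  assumes "\<And>s a. a \<in> set_pmf (pol s) \<Longrightarrow> (s, a) \<notin> I"
  shows "y \<in> set_pmf (map_pmf (lastk I) (traj pol P d t)) \<Longrightarrow> \<not> snd y \<and> fst y \<notin> I"
proof (induct t arbitrary: y)
  case 0
  then show ?case unfolding lastk_0 using assms by auto
next
  case (Suc t)
  have "y \<in> set_pmf (bind_pmf (map_pmf (lastk I) (traj pol P d t)) (stepK I pol P))"
    using Suc(2) by (simp only: lastk_Suc)
  then obtain z where z: "z \<in> set_pmf (map_pmf (lastk I) (traj pol P d t))" and y: "y \<in> set_pmf (stepK I pol P z)"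
    by (simp only: set_bind_pmf) blast
  from Suc(1)[OF z] y assms show ?case by (auto simp: stepK_def)
qed

definition hitabs :: "('s \<times> 'a) set \<Rightarrow> 's option \<times> 'a \<Rightarrow> real" where
  "hitabs I y = (case fst y of None \<Rightarrow> 0 | Some s \<Rightarrow> if (s, snd y) \<in> I then 1 else 0)"

lemma hitabs_bound: "\<bar>hitabs I y\<bar> \<le> 1"
  by (cases "fst y") (auto simp: hitabs_def)

lemma Hbound:
  fixes P :: "'s \<Rightarrow> 'a \<Rightarrow> 's pmf"
  assumes g: "0 \<le> \<gamma>" "\<gamma> < 1" and r: "\<And>s a. 0 \<le> r s a \<and> r s a \<le> 1"
    and nonint: "\<And>s. \<exists>a. (s, a) \<notin> I"
  shows "(\<Sum>t. \<gamma>^t * Ex (map_pmf Fk (map_pmf (lastk I) (traj \<pi>h P d0 t))) (hitabs I))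
     \<le> (SUP pol. dval \<gamma> (absP I P) (absr I (-1) r) pol (map_pmf Some d0))
        - dval \<gamma> (absP I P) (absr I (-1) r) (extpol \<pi>h) (map_pmf Some d0)"
proof -
  let ?V = "\<lambda>pol. dval \<gamma> (absP I P) (absr I (-1) r) pol (map_pmf Some d0)"
  have bdd: "bdd_above (range ?V)"
    by (rule bdd_aboveI2[where M="1/(1-\<gamma>)"]) (rule dval_upper[OF g], rule absr_bound[OF r])
  obtain gs where gs: "\<And>s. (s, gs s) \<notin> I" using nonint by metis
  define m where "m s a = (if (s, a) \<in> I then gs s else a)" for s a
  define \<pi>' where "\<pi>' s = map_pmf (m s) (\<pi>h s)" for s
  define P' where "P' s a = P s (m s a)" for s a
  have P'fun: "P' = (\<lambda>s a. P s (m s a))" by (simp add: P'_def fun_eq_iff)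
  have mI: "(s, m s a) \<notin> I" for s a using gs by (auto simp: m_def)
  have P'eq: "(s, a) \<notin> I \<Longrightarrow> P' s a = P s a" for s a by (simp add: P'_def m_def)
  let ?Lp = "\<lambda>t. map_pmf (lastk I) (traj \<pi>h P' d0 t)"
  have r1: "\<bar>r s a\<bar> \<le> 1" for s a using r[of s a] by auto
  have h1: "?V (extpol \<pi>') \<le> (SUP pol. ?V pol)" by (rule cSUP_upper[OF UNIV_I bdd])
  have V': "?V (extpol \<pi>') = (\<Sum>t. \<gamma>^t * Ex (?Lp t) (\<lambda>y. r (fst (fst y)) (m (fst (fst y)) (snd (fst y)))))"
  proof -
    have "?V (extpol \<pi>') = (\<Sum>t. \<gamma> ^ t * Ex (map_pmf (lastk I) (traj \<pi>' P d0 t)) (\<lambda>y. absr I (-1) r (fst (Fk y)) (snd (Fk y))))"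
      by (rule dval_abs) simp
    also have "\<dots> = (\<Sum>t. \<gamma> ^ t * Ex (map_pmf (lastk I) (traj \<pi>' P d0 t)) (\<lambda>y. r (fst (fst y)) (snd (fst y))))"
    proof (rule suminf_cong, rule arg_cong[where f="\<lambda>x. _ * x"], rule exp_cong_pmf)
      fix t y assume y: "y \<in> set_pmf (map_pmf (lastk I) (traj \<pi>' P d0 t))"
      have "\<not> snd y \<and> fst y \<notin> I"
        by (rule nokill[OF _ y]) (auto simp: \<pi>'_def mI)
      then show "absr I (-1) r (fst (Fk y)) (snd (Fk y)) = r (fst (fst y)) (snd (fst y))"
        by (cases "fst y") (auto simp: Fk_def absr_def)
    qed
    also have "\<dots> = (\<Sum>t. \<gamma> ^ t * Ex (map_pmf last (traj \<pi>' P d0 t)) (\<lambda>y. r (fst y) (snd y)))"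
      by (simp add: lastk_def)
    also have "\<dots> = (\<Sum>t. \<gamma>^t * Ex (?Lp t) (\<lambda>y. r (fst (fst y)) (m (fst (fst y)) (snd (fst y)))))"
      unfolding \<pi>'_def modL by (simp add: lastk_def P'fun)
    finally show ?thesis .
  qed
  have Vh: "?V (extpol \<pi>h) = (\<Sum>t. \<gamma>^t * Ex (?Lp t) (\<lambda>y. absr I (-1) r (fst (Fk y)) (snd (Fk y))))"
    by (rule dval_abs) (rule P'eq)
  have Heq: "map_pmf Fk (map_pmf (lastk I) (traj \<pi>h P d0 t)) = map_pmf Fk (?Lp t)" for t
    using absL[of I P' P \<pi>h d0 t, OF P'eq] absL[of I P P \<pi>h d0 t] by simp
  define a where "a t = Ex (?Lp t) (\<lambda>y. r (fst (fst y)) (m (fst (fst y)) (snd (fst y))))" for t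
  define b where "b t = Ex (?Lp t) (\<lambda>y. absr I (-1) r (fst (Fk y)) (snd (Fk y)))" for t
  define c where "c t = Ex (?Lp t) (\<lambda>y. hitabs I (Fk y))" for t
  have ba: "\<bar>a t\<bar> \<le> 1" for t unfolding a_def by (rule exp_bound_pmf) (rule r1)
  have bb: "\<bar>b t\<bar> \<le> 1" for t unfolding b_def by (rule exp_bound_pmf) (rule absr_bound[OF r])
  have bc: "\<bar>c t\<bar> \<le> 1" for t unfolding c_def by (rule exp_bound_pmf) (rule hitabs_bound)
  have sa: "summable (\<lambda>t. \<gamma>^t * a t)" by (rule summable_gbdd[OF g ba])
  have sb: "summable (\<lambda>t. \<gamma>^t * b t)" by (rule summable_gbdd[OF g bb])
  have sc: "summable (\<lambda>t. \<gamma>^t * c t)" by (rule summable_gbdd[OF g bc])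
  have "(\<Sum>t. \<gamma>^t * Ex (map_pmf Fk (map_pmf (lastk I) (traj \<pi>h P d0 t))) (hitabs I)) = (\<Sum>t. \<gamma>^t * c t)"
    unfolding Heq c_def by simp
  have fe: "(\<lambda>t. \<gamma>^t * (a t - b t - c t)) = (\<lambda>t. \<gamma>^t * a t - \<gamma>^t * b t - \<gamma>^t * c t)"
    by (simp add: algebra_simps)
  have sd: "(\<Sum>t. \<gamma>^t * (a t - b t - c t)) = (\<Sum>t. \<gamma>^t * a t) - (\<Sum>t. \<gamma>^t * b t) - (\<Sum>t. \<gamma>^t * c t)"
    unfolding fe suminf_diff[OF summable_diff[OF sa sb] sc, symmetric] suminf_diff[OF sa sb, symmetric] ..
  have nn: "(\<Sum>t. \<gamma>^t * (a t - b t - c t)) \<ge> 0"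
  proof (rule suminf_nonneg)
    show "summable (\<lambda>t. \<gamma>^t * (a t - b t - c t))"
      unfolding fe by (rule summable_diff[OF summable_diff[OF sa sb] sc])
    show "0 \<le> \<gamma>^t * (a t - b t - c t)" for t
    proof -
      have "b t + c t = Ex (?Lp t) (\<lambda>y. absr I (-1) r (fst (Fk y)) (snd (Fk y)) + hitabs I (Fk y))"
        unfolding b_def c_def by (rule exp_add[symmetric, where Bf=1 and Bg=1]) (rule absr_bound[OF r], rule hitabs_bound)
      also have "\<dots> \<le> a t" unfolding a_def
      proof (rule exp_mono_pmf[where B=2 and B'=1])
        fix y
        show "\<bar>absr I (-1) r (fst (Fk y)) (snd (Fk y)) + hitabs I (Fk y)\<bar> \<le> 2"
        proof -
          have "\<bar>absr I (-1) r (fst (Fk y)) (snd (Fk y))\<bar> \<le> 1" by (rule absr_bound[OF r])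
          then show ?thesis using hitabs_bound[of I "Fk y"] by linarith
        qed
        show "\<bar>r (fst (fst y)) (m (fst (fst y)) (snd (fst y)))\<bar> \<le> 1" by (rule r1)
        show "absr I (-1) r (fst (Fk y)) (snd (Fk y)) + hitabs I (Fk y) \<le> r (fst (fst y)) (m (fst (fst y)) (snd (fst y)))"
          using r[of "fst (fst y)" "m (fst (fst y)) (snd (fst y))"]
          by (cases y) (auto simp: Fk_def absr_def hitabs_def m_def)
      qed
      finally show ?thesis using g by simp
    qed
  qed
  have "(\<Sum>t. \<gamma>^t * Ex (map_pmf Fk (map_pmf (lastk I) (traj \<pi>h P d0 t))) (hitabs I)) = (\<Sum>t. \<gamma>^t * c t)"
    unfolding Heq c_def by simp
  then show ?thesis using h1 V' Vh sd nn unfolding a_def[symmetric] b_def[symmetric] by linarith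
qed



lemma telescope:
  fixes C W e :: "nat \<Rightarrow> real"
  assumes step: "\<And>t. C t + \<gamma> * W (Suc t) \<le> W t + e t" and W: "\<And>t. 0 \<le> W t" and g: "0 \<le> \<gamma>"
  shows "(\<Sum>t<n. \<gamma>^t * C t) \<le> W 0 + (\<Sum>t<n. \<gamma>^t * e t)"
proof -
  have "(\<Sum>t<n. \<gamma>^t * C t) + \<gamma>^n * W n \<le> W 0 + (\<Sum>t<n. \<gamma>^t * e t)"
  proof (induct n)
    case 0 then show ?case by simp
  next
    case (Suc n)
    have "\<gamma>^n * (C n + \<gamma> * W (Suc n)) \<le> \<gamma>^n * (W n + e n)"
      using step[of n] g by (intro mult_left_mono) auto
    then show ?case using Suc by (simp add: algebra_simps)
  qed
  moreover have "0 \<le> \<gamma>^n * W n" using g W by simp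
  ultimately show ?thesis by linarith
qed

lemma exp_const_pmf: "Ex p (\<lambda>_. c) = c"
  by simp

lemma exp_lin2:
  fixes f g :: "'b \<Rightarrow> real"
  assumes "\<And>y. \<bar>f y\<bar> \<le> Bf" "\<And>y. \<bar>g y\<bar> \<le> Bg"
  shows "Ex p (\<lambda>y. f y + c * g y) = Ex p f + c * Ex p g"
proof -
  have "Ex p (\<lambda>y. f y + c * g y) = Ex p f + Ex p (\<lambda>y. c * g y)"
    by (rule Bochner_Integration.integral_add[OF integrable_pmf_bdd[OF assms(1)]])
       (rule integrable_mult_right, rule integrable_pmf_bdd[OF assms(2)])
  then show ?thesis by simp
qed

lemma tele_pmf:
  fixes cf Wf ef :: "('s \<times> 'a) \<times> bool \<Rightarrow> real"
  assumes g: "0 \<le> \<gamma>"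
    and bW: "\<And>y. \<bar>Wf y\<bar> \<le> BW" and bc: "\<And>y. \<bar>cf y\<bar> \<le> Bc" and be: "\<And>y. \<bar>ef y\<bar> \<le> Be"
    and W0: "\<And>y. 0 \<le> Wf y"
    and step: "\<And>y. cf y + \<gamma> * Ex (stepK I pol P y) Wf \<le> Wf y + ef y"
  shows "(\<Sum>t<n. \<gamma>^t * Ex (map_pmf (lastk I) (traj pol P d t)) cf)
     \<le> Ex (map_pmf (lastk I) (traj pol P d 0)) Wf + (\<Sum>t<n. \<gamma>^t * Ex (map_pmf (lastk I) (traj pol P d t)) ef)"
proof (rule telescope[OF _ _ g])
  let ?L = "\<lambda>t. map_pmf (lastk I) (traj pol P d t)"
  show "0 \<le> Ex (?L t) Wf" for t by (rule integral_nonneg_AE) (simp add: W0)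
  fix t
  have bS: "\<bar>Ex (stepK I pol P y) Wf\<bar> \<le> BW" for y by (rule exp_bound_pmf[OF bW])
  have "Ex (?L (Suc t)) Wf = Ex (?L t) (\<lambda>y. Ex (stepK I pol P y) Wf)"
    unfolding lastk_Suc by (rule integral_bind_pmf_real[OF bW])
  then have "Ex (?L t) cf + \<gamma> * Ex (?L (Suc t)) Wf = Ex (?L t) (\<lambda>y. cf y + \<gamma> * Ex (stepK I pol P y) Wf)"
    by (simp add: exp_lin2[OF bc bS])
  also have "\<dots> \<le> Ex (?L t) (\<lambda>y. Wf y + 1 * ef y)"
  proof (rule exp_mono_pmf[where B="Bc + \<gamma> * BW" and B'="BW + Be"])
    fix y
    show "cf y + \<gamma> * Ex (stepK I pol P y) Wf \<le> Wf y + 1 * ef y" using step[of y] by simp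
    have "\<bar>\<gamma> * Ex (stepK I pol P y) Wf\<bar> \<le> \<gamma> * BW"
      unfolding abs_mult using g bS[of y] by (simp add: mult_left_mono)
    then show "\<bar>cf y + \<gamma> * Ex (stepK I pol P y) Wf\<bar> \<le> Bc + \<gamma> * BW"
      using bc[of y] abs_triangle_ineq[of "cf y" "\<gamma> * Ex (stepK I pol P y) Wf"] by linarith
    show "\<bar>Wf y + 1 * ef y\<bar> \<le> BW + Be"
      using bW[of y] be[of y] abs_triangle_ineq[of "Wf y" "ef y"] by simp
  qed
  also have "\<dots> = Ex (?L t) Wf + Ex (?L t) ef"
    using exp_lin2[OF bW be, where c=1 and p="?L t"] by simp
  finally show "Ex (?L t) cf + \<gamma> * Ex (?L (Suc t)) Wf \<le> Ex (?L t) Wf + Ex (?L t) ef" .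
qed

lemma Estep:
  fixes G :: "'s \<Rightarrow> bool \<Rightarrow> real"
  assumes "\<And>s k. \<bar>G s k\<bar> \<le> B"
  shows "Ex (stepK I pol P ((s, a), k)) (\<lambda>y. G (fst (fst y)) (snd y)) = Ex (P s a) (\<lambda>s'. G s' (k \<or> (s, a) \<in> I))"
  unfolding stepK_def
  by (subst integral_bind_pmf_real[where B=B]) (auto simp: assms)

lemma hit_Fk: "hitabs I (Fk ((s, a), k)) = (if \<not> k \<and> (s, a) \<in> I then 1 else 0)"
  by (simp add: hitabs_def Fk_def)

lemma costB:
  fixes P :: "'s \<Rightarrow> 'a \<Rightarrow> 's pmf" and Qb :: "'s \<Rightarrow> 'a \<Rightarrow> real"
    and s_tri s_circ :: 's and \<mu> \<pi>h :: "'s \<Rightarrow> 'a pmf" and \<eta> \<sigma> \<gamma> :: real and d0 :: "'s pmf"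
  defines "I \<equiv> interv s_tri s_circ Qb \<mu> \<eta>" and "f \<equiv> polavg (Qext s_tri s_circ Qb) \<mu>"
  assumes g: "0 \<le> \<gamma>" "\<gamma> < 1"
    and distinct: "s_tri \<noteq> s_circ"
    and P_tri: "\<And>a. P s_tri a = return_pmf s_circ"
    and P_circ: "\<And>a. P s_circ a = return_pmf s_circ"
    and Qb_range: "\<And>s a. s \<notin> {s_tri, s_circ} \<Longrightarrow> 0 \<le> Qb s a \<and> Qb s a \<le> 1"
    and adm: "admissible \<gamma> P s_tri s_circ Qb \<mu> \<eta> \<sigma>"
  shows "dval \<gamma> P (cost s_tri) \<pi>h d0 \<le> Ex d0 f + (\<sigma> + \<eta>) / (1 - \<gamma>)
            + \<gamma> * (\<Sum>t. \<gamma>^t * Ex (map_pmf Fk (map_pmf (lastk I) (traj \<pi>h P d0 t))) (hitabs I))"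
   and "dval \<gamma> P (cost s_tri) \<pi>h d0 \<le> Ex d0 f + \<gamma>"
proof -
  have sig: "0 \<le> \<sigma>" and eta: "0 \<le> \<eta>" using adm by (auto simp: admissible_def)
  have adm_s: "cost s_tri s a + \<gamma> * Ex (P s a) f \<le> Qb s a + \<sigma>" if "s \<notin> {s_tri, s_circ}" for s a
    using adm that unfolding admissible_def f_def by auto
  have Qe: "0 \<le> Qext s_tri s_circ Qb s a \<and> Qext s_tri s_circ Qb s a \<le> 1" for s a
    using Qb_range[of s a] by (auto simp: Qext_def)
  have fb: "0 \<le> f s \<and> f s \<le> 1" for s
  proof -
    have "0 \<le> Ex (\<mu> s) (Qext s_tri s_circ Qb s)" by (rule integral_nonneg_AE) (simp add: Qe)
    moreover have "Ex (\<mu> s) (Qext s_tri s_circ Qb s) \<le> Ex (\<mu> s) (\<lambda>_. 1)"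
      by (rule exp_mono_pmf[where B=1 and B'=1]) (use Qe in \<open>auto simp: abs_le_iff\<close>)
    ultimately show ?thesis by (simp add: f_def polavg_def)
  qed
  have "Qext s_tri s_circ Qb s_tri = (\<lambda>_. 1)" "Qext s_tri s_circ Qb s_circ = (\<lambda>_. 0)"
    using distinct by (simp_all add: fun_eq_iff Qext_def)
  then have f_tri: "f s_tri = 1" and f_circ: "f s_circ = 0"
    by (simp_all add: f_def polavg_def)
  have Imem: "(s, a) \<in> I \<longleftrightarrow> s \<notin> {s_tri, s_circ} \<and> Qext s_tri s_circ Qb s a - f s > \<eta>" for s a
    by (simp add: I_def interv_def f_def)
  define wF where "wF s = (if s = s_tri then 1 else if s = s_circ then 0 else \<gamma>)" for s
  have wFb: "0 \<le> wF s \<and> wF s \<le> 1" for s using g by (simp add: wF_def)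
  have wF_circ: "wF s_circ = 0" using distinct by (simp add: wF_def)
  have ExwF: "0 \<le> Ex (P s a) wF \<and> Ex (P s a) wF \<le> 1" for s a
  proof -
    have "0 \<le> Ex (P s a) wF" by (rule integral_nonneg_AE) (simp add: wFb)
    moreover have "Ex (P s a) wF \<le> Ex (P s a) (\<lambda>_. 1)"
      by (rule exp_mono_pmf[where B=1 and B'=1]) (use wFb in \<open>auto simp: abs_le_iff\<close>)
    ultimately show ?thesis by simp
  qed
  let ?L = "\<lambda>t. map_pmf (lastk I) (traj \<pi>h P d0 t)"
  let ?cf = "\<lambda>y::('s \<times> 'a) \<times> bool. cost s_tri (fst (fst y)) (snd (fst y))"
  have bcf: "\<bar>?cf y\<bar> \<le> 1" for y by (simp add: cost_def)
  have cnn: "summable (\<lambda>t. \<gamma>^t * Ex (?L t) ?cf)"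
    by (rule summable_gbdd[OF g]) (rule exp_bound_pmf[OF bcf])
  have dv: "dval \<gamma> P (cost s_tri) \<pi>h d0 = (\<Sum>t. \<gamma>^t * Ex (?L t) ?cf)"
    by (rule dval_lastk)
  have L0: "Ex (?L 0) (\<lambda>y. G (fst (fst y))) = Ex d0 G" if "\<And>s. \<bar>G s\<bar> \<le> B" for G :: "'s \<Rightarrow> real" and B
    unfolding lastk_0 by (subst integral_bind_pmf_real[where B=B]) (auto simp: that)
  show "dval \<gamma> P (cost s_tri) \<pi>h d0 \<le> Ex d0 f + \<gamma>"
  proof -
    have "(\<Sum>t<n. \<gamma>^t * Ex (?L t) ?cf) \<le> Ex (?L 0) (\<lambda>y. wF (fst (fst y))) + (\<Sum>t<n. \<gamma>^t * Ex (?L t) (\<lambda>y. 0))" for n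
    proof (rule tele_pmf[OF g(1) _ bcf, where BW=1 and Be=0])
      show "\<bar>wF (fst (fst y))\<bar> \<le> 1" for y using wFb by (simp add: abs_le_iff)
      show "0 \<le> wF (fst (fst y))" for y using wFb by simp
      show "\<bar>0::real\<bar> \<le> 0" by simp
      fix y :: "('s \<times> 'a) \<times> bool"
      obtain s a k where y: "y = ((s, a), k)" by (cases y) auto
      have E: "Ex (stepK I \<pi>h P y) (\<lambda>y. wF (fst (fst y))) = Ex (P s a) wF"
        unfolding y using Estep[of "\<lambda>s k. wF s" 1 I \<pi>h P s a k] wFb by (simp add: abs_le_iff)
      show "?cf y + \<gamma> * Ex (stepK I \<pi>h P y) (\<lambda>y. wF (fst (fst y))) \<le> wF (fst (fst y)) + 0"
        unfolding E
      proof -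
        consider "s = s_tri" | "s = s_circ" | "s \<notin> {s_tri, s_circ}" by auto
        then show "?cf y + \<gamma> * Ex (P s a) wF \<le> wF (fst (fst y)) + 0"
        proof cases
          case 1 then show ?thesis using distinct by (simp add: y P_tri wF_circ cost_def wF_def)
        next
          case 2 then show ?thesis using distinct by (simp add: y P_circ wF_circ cost_def wF_def)
        next
          case 3
          have "\<gamma> * Ex (P s a) wF \<le> \<gamma> * 1" using g ExwF[of s a] by (intro mult_left_mono) auto
          with 3 show ?thesis by (simp add: y cost_def wF_def)
        qed
      qed
    qed
    then have "(\<Sum>t<n. \<gamma>^t * Ex (?L t) ?cf) \<le> Ex d0 f + \<gamma>" for n
    proof -
      assume a: "(\<Sum>t<n. \<gamma>^t * Ex (?L t) ?cf) \<le> Ex (?L 0) (\<lambda>y. wF (fst (fst y))) + (\<Sum>t<n. \<gamma>^t * Ex (?L t) (\<lambda>y. 0))" for n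
      have "Ex (?L 0) (\<lambda>y. wF (fst (fst y))) = Ex d0 wF" by (rule L0[where B=1]) (use wFb in \<open>auto simp: abs_le_iff\<close>)
      also have "\<dots> \<le> Ex d0 (\<lambda>s. f s + \<gamma>)"
      proof (rule exp_mono_pmf[where B=1 and B'=2])
        fix s
        show "wF s \<le> f s + \<gamma>" using fb[of s] g by (auto simp: wF_def f_tri f_circ)
        show "\<bar>wF s\<bar> \<le> 1" using wFb[of s] by simp
        show "\<bar>f s + \<gamma>\<bar> \<le> 2" using fb[of s] g by simp
      qed
      also have "\<dots> = Ex d0 f + \<gamma>"
        using exp_lin2[of f 1 "\<lambda>_. 1" 1 d0 \<gamma>] fb by (simp add: abs_le_iff)
      finally show ?thesis using a[of n] by simp
    qed
    then show ?thesis unfolding dv by (rule suminf_le_const[OF cnn])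
  qed
  show "dval \<gamma> P (cost s_tri) \<pi>h d0 \<le> Ex d0 f + (\<sigma> + \<eta>) / (1 - \<gamma>)
            + \<gamma> * (\<Sum>t. \<gamma>^t * Ex (map_pmf Fk (map_pmf (lastk I) (traj \<pi>h P d0 t))) (hitabs I))"
  proof -
    define G where "G s k = (if k then wF s else f s)" for s k
    have Gb: "0 \<le> G s k \<and> G s k \<le> 1" for s k using wFb fb by (simp add: G_def)
    have Gb': "\<bar>G s k\<bar> \<le> 1" for s k using Gb[of s k] by simp
    define h where "h t = Ex (?L t) (\<lambda>y. hitabs I (Fk y))" for t
    have hb: "0 \<le> hitabs I y \<and> hitabs I y \<le> 1" for y by (cases "fst y") (auto simp: hitabs_def)
    have hnn: "0 \<le> h t" for t unfolding h_def by (rule integral_nonneg_AE) (simp add: hb)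
    have hb': "\<bar>h t\<bar> \<le> 1" for t unfolding h_def by (rule exp_bound_pmf) (rule hitabs_bound)
    have sh: "summable (\<lambda>t. \<gamma>^t * h t)" by (rule summable_gbdd[OF g hb'])
    let ?ef = "\<lambda>y. (\<sigma> + \<eta>) + \<gamma> * hitabs I (Fk y)"
    have tel: "(\<Sum>t<n. \<gamma>^t * Ex (?L t) ?cf) \<le> Ex (?L 0) (\<lambda>y. G (fst (fst y)) (snd y)) + (\<Sum>t<n. \<gamma>^t * Ex (?L t) ?ef)" for n
    proof (rule tele_pmf[OF g(1) _ bcf, where BW=1 and Be="\<sigma> + \<eta> + \<gamma>"])
      show "\<bar>G (fst (fst y)) (snd y)\<bar> \<le> 1" for y by (rule Gb')
      show "0 \<le> G (fst (fst y)) (snd y)" for y using Gb by simp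
      show "\<bar>?ef y\<bar> \<le> \<sigma> + \<eta> + \<gamma>" for y
        using hb[of "Fk y"] sig eta g by (simp add: abs_le_iff) (smt (z3) mult_left_le mult_nonneg_nonneg)
      fix y :: "('s \<times> 'a) \<times> bool"
      obtain s a k where y: "y = ((s, a), k)" by (cases y) auto
      have E: "Ex (stepK I \<pi>h P y) (\<lambda>y. G (fst (fst y)) (snd y)) = Ex (P s a) (\<lambda>s'. G s' (k \<or> (s, a) \<in> I))"
        unfolding y by (rule Estep[OF Gb'])
      have Gw: "G s' True = wF s'" and Gf: "G s' False = f s'" for s' by (simp_all add: G_def)
      have key: "cost s_tri s a + \<gamma> * Ex (P s a) (\<lambda>s'. G s' (k \<or> (s, a) \<in> I))
          \<le> G s k + ((\<sigma> + \<eta>) + \<gamma> * (if \<not> k \<and> (s, a) \<in> I then 1 else 0))"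
      proof -
        consider "k" | "\<not> k" "(s, a) \<in> I" | "\<not> k" "(s, a) \<notin> I" by auto
        then show "cost s_tri s a + \<gamma> * Ex (P s a) (\<lambda>s'. G s' (k \<or> (s, a) \<in> I))
          \<le> G s k + ((\<sigma> + \<eta>) + \<gamma> * (if \<not> k \<and> (s, a) \<in> I then 1 else 0))"
        proof cases
          case 1
          have "cost s_tri s a + \<gamma> * Ex (P s a) wF \<le> wF s"
          proof -
            consider "s = s_tri" | "s = s_circ" | "s \<notin> {s_tri, s_circ}" by auto
            then show ?thesis
            proof cases
              case 1 then show ?thesis using distinct by (simp add: P_tri wF_circ cost_def wF_def)
            next
              case 2 then show ?thesis using distinct by (simp add: P_circ wF_circ cost_def wF_def)
            next
              case 3
              have "\<gamma> * Ex (P s a) wF \<le> \<gamma> * 1" using g ExwF[of s a] by (intro mult_left_mono) auto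
              with 3 show ?thesis by (simp add: cost_def wF_def)
            qed
          qed
          with 1 sig eta show ?thesis by (simp add: Gw)
        next
          case 2
          then have safe: "s \<notin> {s_tri, s_circ}" using Imem by auto
          have "\<gamma> * Ex (P s a) wF \<le> \<gamma> * 1" using g ExwF[of s a] by (intro mult_left_mono) auto
          with 2 safe sig eta fb[of s] show ?thesis by (simp add: Gw Gf cost_def)
        next
          case 3
          consider "s = s_tri" | "s = s_circ" | "s \<notin> {s_tri, s_circ}" by auto
          then show ?thesis
          proof cases
            case 1 then show ?thesis using distinct 3 sig eta by (simp add: P_tri Gf f_circ f_tri cost_def)
          next
            case 2 then show ?thesis using distinct 3 sig eta by (simp add: P_circ Gf f_circ cost_def)
          next
            case s3: 3
            have "Qext s_tri s_circ Qb s a - f s \<le> \<eta>" using 3 s3 Imem by auto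
            moreover have "Qext s_tri s_circ Qb s a = Qb s a" using s3 by (simp add: Qext_def)
            ultimately show ?thesis using adm_s[OF s3, of a] 3 by (simp add: Gf)
          qed
        qed
      qed
      show "?cf y + \<gamma> * Ex (stepK I \<pi>h P y) (\<lambda>y. G (fst (fst y)) (snd y)) \<le> G (fst (fst y)) (snd y) + ?ef y"
        using key unfolding E by (simp add: y hit_Fk)
    qed
    have L0': "Ex (?L 0) (\<lambda>y. G (fst (fst y)) (snd y)) = Ex d0 f"
      unfolding lastk_0 by (subst integral_bind_pmf_real[where B=1], rule Gb') (simp add: G_def)
    have efe: "Ex (?L t) ?ef = (\<sigma> + \<eta>) + \<gamma> * h t" for t
      unfolding h_def using exp_lin2[of "\<lambda>_. \<sigma> + \<eta>" "\<bar>\<sigma> + \<eta>\<bar>" "\<lambda>y. hitabs I (Fk y)" 1 "?L t" \<gamma>]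
      by (simp add: hitabs_bound)
    have geo: "(\<Sum>t<n. \<gamma>^t) \<le> 1 / (1 - \<gamma>)" for n
      using sum_le_suminf[OF summable_geometric[of \<gamma>], of "{..<n}"] g suminf_geometric[of \<gamma>] by simp
    have hs: "(\<Sum>t<n. \<gamma>^t * h t) \<le> (\<Sum>t. \<gamma>^t * h t)" for n
      by (rule sum_le_suminf[OF sh]) (use g hnn in auto)
    have Heq: "(\<Sum>t. \<gamma>^t * Ex (map_pmf Fk (map_pmf (lastk I) (traj \<pi>h P d0 t))) (hitabs I)) = (\<Sum>t. \<gamma>^t * h t)"
      unfolding h_def by simp
    have "(\<Sum>t<n. \<gamma>^t * Ex (?L t) ?cf) \<le> Ex d0 f + (\<sigma> + \<eta>) / (1 - \<gamma>) + \<gamma> * (\<Sum>t. \<gamma>^t * h t)" for n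
    proof -
      have "(\<Sum>t<n. \<gamma>^t * Ex (?L t) ?ef) = (\<sigma> + \<eta>) * (\<Sum>t<n. \<gamma>^t) + \<gamma> * (\<Sum>t<n. \<gamma>^t * h t)"
        unfolding efe by (simp add: algebra_simps sum.distrib sum_distrib_left)
      also have "\<dots> \<le> (\<sigma> + \<eta>) * (1 / (1 - \<gamma>)) + \<gamma> * (\<Sum>t. \<gamma>^t * h t)"
        using geo[of n] hs[of n] sig eta g by (intro add_mono mult_left_mono) auto
      finally show ?thesis using tel[of n] L0' by simp
    qed
    then show ?thesis unfolding dv Heq by (rule suminf_le_const[OF cnn])
  qed
qed

lemma exists_le_exp:
  fixes g :: "'b \<Rightarrow> real"
  assumes "\<And>x. \<bar>g x\<bar> \<le> B"
  shows "\<exists>a\<in>set_pmf p. g a \<le> Ex p g"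
proof (rule ccontr)
  assume "\<not> ?thesis"
  then have lt: "\<And>a. a \<in> set_pmf p \<Longrightarrow> Ex p g < g a" by auto
  have "Ex p (\<lambda>_. Ex p g) < Ex p g"
    by (rule measure_pmf.integral_less_AE_space)
       (auto simp: AE_measure_pmf_iff lt intro: integrable_pmf_bdd[OF assms])
  then show False by simp
qed

theorem mainTheorem1:
  fixes P :: "'s::countable \<Rightarrow> 'a::countable \<Rightarrow> 's pmf"
    and r :: "'s \<Rightarrow> 'a \<Rightarrow> real"
    and \<gamma> \<sigma> \<eta> \<epsilon> :: real
    and d0 :: "'s pmf"
    and s_tri s_circ :: 's
    and Qb :: "'s \<Rightarrow> 'a \<Rightarrow> real"
    and \<mu> \<pi>hat \<pi>star :: "'s \<Rightarrow> 'a pmf"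
  assumes gamma: "0 \<le> \<gamma>" "\<gamma> < 1"
    and distinct: "s_tri \<noteq> s_circ"
    and r_range: "\<And>s a. 0 \<le> r s a \<and> r s a \<le> 1"
    and r_unsafe: "\<And>a. r s_tri a = 0" "\<And>a. r s_circ a = 0"
    and P_tri: "\<And>a. P s_tri a = return_pmf s_circ"
    and P_circ: "\<And>a. P s_circ a = return_pmf s_circ"
    and d0_circ: "pmf d0 s_circ = 0"
    and Qb_range: "\<And>s a. s \<notin> {s_tri, s_circ} \<Longrightarrow> 0 \<le> Qb s a \<and> Qb s a \<le> 1"
    and adm: "admissible \<gamma> P s_tri s_circ Qb \<mu> \<eta> \<sigma>"
    and subopt:
      "(SUP pol :: 's option \<Rightarrow> 'a pmf.
          dval \<gamma> (absP (interv s_tri s_circ Qb \<mu> \<eta>) P) (absr (interv s_tri s_circ Qb \<mu> \<eta>) (-1) r)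
               pol (map_pmf Some d0))
       - dval \<gamma> (absP (interv s_tri s_circ Qb \<mu> \<eta>) P) (absr (interv s_tri s_circ Qb \<mu> \<eta>) (-1) r)
               (extpol \<pi>hat) (map_pmf Some d0) \<le> \<epsilon>"
  shows "dval \<gamma> P r \<pi>star d0 - dval \<gamma> P r \<pi>hat d0
           \<le> 2 / (1 - \<gamma>) * PG \<gamma> P d0 (interv s_tri s_circ Qb \<mu> \<eta>) \<pi>star + \<epsilon>
         \<and> dval \<gamma> P (cost s_tri) \<pi>hat d0
           \<le> measure_pmf.expectation d0 (polavg (Qext s_tri s_circ Qb) \<mu>)
             + min (\<sigma> + \<eta>) (2 * \<gamma>) / (1 - \<gamma>) + \<epsilon>"
proof
  let ?I = "interv s_tri s_circ Qb \<mu> \<eta>"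
  let ?f = "polavg (Qext s_tri s_circ Qb) \<mu>"
  let ?V = "\<lambda>pol. dval \<gamma> (absP ?I P) (absr ?I (-1) r) pol (map_pmf Some d0)"
  show "dval \<gamma> P r \<pi>star d0 - dval \<gamma> P r \<pi>hat d0
           \<le> 2 / (1 - \<gamma>) * PG \<gamma> P d0 ?I \<pi>star + \<epsilon>"
    by (rule partA[OF gamma r_range subopt])
  have eta: "0 \<le> \<eta>" using adm by (simp add: admissible_def)
  have Qe: "\<bar>Qext s_tri s_circ Qb s a\<bar> \<le> 1" for s a
    using Qb_range[of s a] by (auto simp: Qext_def)
  have nonint: "\<exists>a. (s, a) \<notin> ?I" for s
  proof -
    obtain a where "a \<in> set_pmf (\<mu> s)" "Qext s_tri s_circ Qb s a \<le> Ex (\<mu> s) (Qext s_tri s_circ Qb s)"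
      using exists_le_exp[of "Qext s_tri s_circ Qb s" 1 "\<mu> s"] Qe by blast
    then have "(s, a) \<notin> ?I" using eta by (auto simp: interv_def polavg_def)
    then show ?thesis by blast
  qed
  have bdd: "bdd_above (range ?V)"
    by (rule bdd_aboveI2[where M="1/(1-\<gamma>)"]) (rule dval_upper[OF gamma], rule absr_bound[OF r_range])
  have eps: "0 \<le> \<epsilon>" using cSUP_upper[OF UNIV_I bdd, of "extpol \<pi>hat"] subopt by linarith
  define H where "H = (\<Sum>t. \<gamma>^t * Ex (map_pmf Fk (map_pmf (lastk ?I) (traj \<pi>hat P d0 t))) (hitabs ?I))"
  have "H \<le> (SUP pol. ?V pol) - ?V (extpol \<pi>hat)"
    unfolding H_def by (rule Hbound[OF gamma r_range nonint])
  then have HE: "H \<le> \<epsilon>" using subopt by linarith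
  have gH: "\<gamma> * H \<le> \<epsilon>"
  proof (cases "H \<le> 0")
    case True then show ?thesis using gamma eps by (smt (z3) mult_nonneg_nonpos)
  next
    case False then have "\<gamma> * H \<le> 1 * H" using gamma by (intro mult_right_mono) auto
    then show ?thesis using HE by simp
  qed
  have c1: "dval \<gamma> P (cost s_tri) \<pi>hat d0 \<le> Ex d0 ?f + (\<sigma> + \<eta>) / (1 - \<gamma>) + \<gamma> * H"
    unfolding H_def by (rule costB(1)[OF gamma distinct P_tri P_circ Qb_range adm])
  have c2: "dval \<gamma> P (cost s_tri) \<pi>hat d0 \<le> Ex d0 ?f + \<gamma>"
    by (rule costB(2)[OF gamma distinct P_tri P_circ Qb_range adm])
  show "dval \<gamma> P (cost s_tri) \<pi>hat d0 \<le> Ex d0 ?f + min (\<sigma> + \<eta>) (2 * \<gamma>) / (1 - \<gamma>) + \<epsilon>"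
  proof (cases "\<sigma> + \<eta> \<le> 2 * \<gamma>")
    case True then show ?thesis using c1 gH by (simp add: min_def)
  next
    case False
    have "\<gamma> \<le> 2 * \<gamma> / (1 - \<gamma>)" using gamma by (simp add: field_simps)
    with False show ?thesis using c2 eps by (simp add: min_def)
  qed
qed

end
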